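(* The $C$-shaped supergrid graph $C(m,n;k,l;c,d)$ contains a Hamiltonian cycle if and only if neither $a=m-k=1$ nor there exists a vertex $w$ of $C(m,n;k,l;c,d)$ with $\deg(w)=1$.
   Context: A supergrid graph is a finite vertex-induced subgraph of the infinite graph on integer points of the plane in which two vertices are adjacent iff their x- and y-coordinates each differ by at most 1. $R(m,n)$ denotes the rectangular supergrid graph on vertices $(x,y)$ with $1\le x\le m$, $1\le y\le n$. The $C$-shaped supergrid graph $C(m,n;k,l;c,d)$ is obtained from $R(m,n)$ by removing a subgraph $R(k,l)$ starting at the node $(m,c+1)$, such that $R(m,n)$ and $R(k,l)$ share exactly one border side, where $m\ge 2$, $n\ge 3$, $k,l\ge 1$, $c\ge 1$, $d=n-l-c\ge 1$, and $a=m-k\ge 1$. *)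

theory Defs
  imports Main
begin

type_synonym vert = "int \<times> int"

definition sg_adj :: "vert \<Rightarrow> vert \<Rightarrow> bool" where
  "sg_adj u v \<longleftrightarrow> u \<noteq> v \<and> \<bar>fst u - fst v\<bar> \<le> 1 \<and> \<bar>snd u - snd v\<bar> \<le> 1"

definition rect_sg :: "nat \<Rightarrow> nat \<Rightarrow> vert set" where
  "rect_sg m n = {(x, y). 1 \<le> x \<and> x \<le> int m \<and> 1 \<le> y \<and> y \<le> int n}"

text \<open>Vertex set of C(m,n;k,l;c,d): R(m,n) with the k x l rectangle starting at
node (m, c+1) removed (columns m-k+1..m, rows c+1..c+l); d = n-l-c rows remain
on the other side.  The parameter d is determined by the others.\<close>
definition C_sg :: "nat \<Rightarrow> nat \<Rightarrow> nat \<Rightarrow> nat \<Rightarrow> nat \<Rightarrow> nat \<Rightarrow> vert set" where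
  "C_sg m n k l c d = rect_sg m n -
     {(x, y). int m - int k + 1 \<le> x \<and> x \<le> int m \<and> int c + 1 \<le> y \<and> y \<le> int c + int l}"

definition sg_deg :: "vert set \<Rightarrow> vert \<Rightarrow> nat" where
  "sg_deg V v = card {u \<in> V. sg_adj v u}"

definition sg_hamiltonian_cycle :: "vert set \<Rightarrow> bool" where
  "sg_hamiltonian_cycle V \<longleftrightarrow>
     (\<exists>vs. distinct vs \<and> set vs = V \<and> length vs \<ge> 3 \<and>
        (\<forall>i. Suc i < length vs \<longrightarrow> sg_adj (vs ! i) (vs ! Suc i)) \<and>
        sg_adj (last vs) (hd vs))"

end

theory Submission
  imports Defs
begin


definition hp :: "vert set \<Rightarrow> vert \<Rightarrow> vert \<Rightarrow> bool" where
  "hp V s t \<longleftrightarrow> (\<exists>vs. vs \<noteq> [] \<and> distinct vs \<and> set vs = V \<and> hd vs = s \<and> last vs = t \<and> successively sg_adj vs)"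

definition box :: "int \<Rightarrow> int \<Rightarrow> int \<Rightarrow> int \<Rightarrow> vert set" where
  "box x1 x2 y1 y2 = {(x, y). x1 \<le> x \<and> x \<le> x2 \<and> y1 \<le> y \<and> y \<le> y2}"

lemma sg_adj_sym: "sg_adj u v \<Longrightarrow> sg_adj v u"
  unfolding sg_adj_def by auto

lemma hp_single: "hp {v} v v"
  unfolding hp_def by (rule exI[of _ "[v]"]) auto

lemma hp_append:
  assumes "hp A s1 t1" "hp B s2 t2" "A \<inter> B = {}" "sg_adj t1 s2"
  shows "hp (A \<union> B) s1 t2"
proof -
  obtain xs where xs: "xs \<noteq> []" "distinct xs" "set xs = A" "hd xs = s1" "last xs = t1" "successively sg_adj xs"
    using assms(1) unfolding hp_def by blast
  obtain ys where ys: "ys \<noteq> []" "distinct ys" "set ys = B" "hd ys = s2" "last ys = t2" "successively sg_adj ys"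
    using assms(2) unfolding hp_def by blast
  show ?thesis unfolding hp_def
    by (rule exI[of _ "xs @ ys"]) (use xs ys assms(3,4) in \<open>auto simp: successively_append_iff\<close>)
qed

lemma hp_rev: "hp A s t \<Longrightarrow> hp A t s"
  unfolding hp_def
  apply clarify
  subgoal for vs
    by (rule exI[of _ "rev vs"]) (auto simp: hd_rev last_rev intro: successively_mono sg_adj_sym)
  done

lemma hp_map:
  assumes "hp V s t" "inj_on f V" "\<And>u v. sg_adj u v \<Longrightarrow> sg_adj (f u) (f v)"
  shows "hp (f ` V) (f s) (f t)"
proof -
  obtain xs where xs: "xs \<noteq> []" "distinct xs" "set xs = V" "hd xs = s" "last xs = t" "successively sg_adj xs"
    using assms(1) unfolding hp_def by blast
  show ?thesis unfolding hp_def
    by (rule exI[of _ "map f xs"])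
       (use xs assms(2,3) in \<open>auto simp: distinct_map hd_map last_map successively_map intro: successively_mono\<close>)
qed

lemma hp_cong: "hp A s t \<Longrightarrow> A = B \<Longrightarrow> hp B s t" by simp

lemma hp_row:
  assumes "x1 \<le> x2" shows "hp (box x1 x2 y y) (x1, y) (x2, y)"
  using assms
proof (induction x2 rule: int_ge_induct)
  case base
  have "box x1 x1 y y = {(x1,y)}" unfolding box_def by auto
  then show ?case using hp_single by simp
next
  case (step i)
  have "hp (box x1 i y y \<union> {(i+1,y)}) (x1,y) (i+1,y)"
    by (rule hp_append[OF step(2) hp_single]) (auto simp: box_def sg_adj_def)
  moreover have "box x1 i y y \<union> {(i+1,y)} = box x1 (i+1) y y"
    unfolding box_def using step(1) by auto
  ultimately show ?case by simp
qed

lemma hp_col: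
  assumes "y1 \<le> y2" shows "hp (box x x y1 y2) (x, y1) (x, y2)"
  using assms
proof (induction y2 rule: int_ge_induct)
  case base
  have "box x x y1 y1 = {(x,y1)}" unfolding box_def by auto
  then show ?case using hp_single by simp
next
  case (step i)
  have "hp (box x x y1 i \<union> {(x,i+1)}) (x,y1) (x,i+1)"
    by (rule hp_append[OF step(2) hp_single]) (auto simp: box_def sg_adj_def)
  moreover have "box x x y1 i \<union> {(x,i+1)} = box x x y1 (i+1)"
    unfolding box_def using step(1) by auto
  ultimately show ?case by simp
qed

lemma hp_zig:
  assumes "x1 \<le> x2" shows "hp (box x1 x2 y (y+1)) (x1, y) (x2, y+1)"
  using assms
proof (induction x2 rule: int_ge_induct)
  case base
  then show ?case using hp_col[of y "y+1" x1] by simp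
next
  case (step i)
  have "hp (box x1 i y (y+1) \<union> box (i+1) (i+1) y (y+1)) (x1,y) (i+1,y+1)"
    by (rule hp_append[OF step(2) hp_col]) (auto simp: box_def sg_adj_def)
  moreover have "box x1 i y (y+1) \<union> box (i+1) (i+1) y (y+1) = box x1 (i+1) y (y+1)"
    unfolding box_def using step(1) by auto
  ultimately show ?case by simp
qed

lemma hp_D:
  assumes "x1 \<le> x2" shows "y2 - y1 = int h \<Longrightarrow> hp (box x1 x2 y1 y2) (x1, y1) (x2, y2)"
proof (induction h arbitrary: y1 rule: less_induct)
  case (less h)
  consider "h = 0" | "h = 1" | "h \<ge> 2" by linarith
  then show ?case
  proof cases
    case 1 then show ?thesis using hp_row[OF assms, of y1] less.prems by simp
  next
    case 2 then have "y2 = y1 + 1" using less.prems by simp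
    then show ?thesis using hp_zig[OF assms, of y1] by simp
  next
    case 3
    have ih: "hp (box x1 x2 (y1+2) y2) (x1, y1+2) (x2, y2)"
      using less.IH[of "h-2" "y1+2"] less.prems 3 by simp
    have r1: "hp (box x1 x2 y1 y1) (x1,y1) (x2,y1)" by (rule hp_row[OF assms])
    have r2: "hp (box x1 x2 (y1+1) (y1+1)) (x2,y1+1) (x1,y1+1)" by (rule hp_rev[OF hp_row[OF assms]])
    have "hp (box x1 x2 y1 y1 \<union> box x1 x2 (y1+1) (y1+1)) (x1,y1) (x1,y1+1)"
      by (rule hp_append[OF r1 r2]) (auto simp: box_def sg_adj_def)
    then have "hp ((box x1 x2 y1 y1 \<union> box x1 x2 (y1+1) (y1+1)) \<union> box x1 x2 (y1+2) y2) (x1,y1) (x2,y2)"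
      by (rule hp_append[OF _ ih]) (auto simp: box_def sg_adj_def)
    moreover have "(box x1 x2 y1 y1 \<union> box x1 x2 (y1+1) (y1+1)) \<union> box x1 x2 (y1+2) y2 = box x1 x2 y1 y2"
      unfolding box_def using less.prems 3 by auto
    ultimately show ?thesis by simp
  qed
qed

lemma hp_D':
  assumes "x1 \<le> x2" "y1 \<le> y2" shows "hp (box x1 x2 y1 y2) (x1, y1) (x2, y2)"
  using hp_D[OF assms(1), of y2 y1 "nat (y2 - y1)"] assms(2) by simp

lemma hp_Danti:
  assumes "x1 \<le> x2" "y1 \<le> y2" shows "hp (box x1 x2 y1 y2) (x2, y1) (x1, y2)"
proof -
  define f where "f = (\<lambda>(x::int,y::int). (x1 + x2 - x, y))"
  have "hp (f ` box x1 x2 y1 y2) (f (x1,y1)) (f (x2,y2))"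
    by (rule hp_map[OF hp_D'[OF assms]]) (auto simp: f_def inj_on_def sg_adj_def)
  moreover have "f ` box x1 x2 y1 y2 = box x1 x2 y1 y2"
  proof
    show "f ` box x1 x2 y1 y2 \<subseteq> box x1 x2 y1 y2" by (auto simp: f_def box_def)
    show "box x1 x2 y1 y2 \<subseteq> f ` box x1 x2 y1 y2"
    proof
      fix p assume p: "p \<in> box x1 x2 y1 y2"
      obtain x y where "p = (x,y)" by fastforce
      then have "p = f (x1 + x2 - x, y)" "(x1 + x2 - x, y) \<in> box x1 x2 y1 y2" using p by (auto simp: f_def box_def)
      then show "p \<in> f ` box x1 x2 y1 y2" by blast
    qed
  qed
  ultimately show ?thesis by (simp add: f_def)
qed

lemma hp_Sleft:
  assumes "x1 \<le> x2" "y1 < y2" shows "hp (box x1 x2 y1 y2) (x1, y1) (x1, y2)"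
proof -
  have "hp (box x1 x2 y1 y1 \<union> box x1 x2 (y1+1) y2) (x1,y1) (x1,y2)"
    by (rule hp_append[OF hp_row[OF assms(1)] hp_Danti]) (use assms in \<open>auto simp: box_def sg_adj_def\<close>)
  moreover have "box x1 x2 y1 y1 \<union> box x1 x2 (y1+1) y2 = box x1 x2 y1 y2"
    unfolding box_def using assms by auto
  ultimately show ?thesis by simp
qed

lemma hp_Sright:
  assumes "x1 \<le> x2" "y1 < y2" shows "hp (box x1 x2 y1 y2) (x2, y1) (x2, y2)"
proof -
  have "hp (box x1 x2 y1 y1 \<union> box x1 x2 (y1+1) y2) (x2,y1) (x2,y2)"
    by (rule hp_append[OF hp_rev[OF hp_row[OF assms(1)]] hp_D']) (use assms in \<open>auto simp: box_def sg_adj_def\<close>)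
  moreover have "box x1 x2 y1 y1 \<union> box x1 x2 (y1+1) y2 = box x1 x2 y1 y2"
    unfolding box_def using assms by auto
  ultimately show ?thesis by simp
qed


lemma hp_cycle:
  assumes "hp V s t" "sg_adj t s" "p \<in> V" "q \<in> V" "r \<in> V" "p \<noteq> q" "q \<noteq> r" "p \<noteq> r"
  shows "sg_hamiltonian_cycle V"
proof -
  obtain xs where xs: "xs \<noteq> []" "distinct xs" "set xs = V" "hd xs = s" "last xs = t" "successively sg_adj xs"
    using assms(1) unfolding hp_def by blast
  have "card {p,q,r} = 3" using assms(6-8) by auto
  moreover have "card {p,q,r} \<le> card (set xs)"
    using assms(3-5) xs(3) by (intro card_mono) auto
  moreover have "card (set xs) = length xs" using xs(2) by (simp add: distinct_card)
  ultimately have "length xs \<ge> 3" by simp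
  then show ?thesis unfolding sg_hamiltonian_cycle_def
    using xs assms(2) by (auto simp: successively_conv_nth)
qed

lemma cyc_adj:
  assumes "\<forall>i. Suc i < length vs \<longrightarrow> sg_adj (vs ! i) (vs ! Suc i)" "sg_adj (last vs) (hd vs)"
    "j < length vs"
  shows "sg_adj (vs ! j) (vs ! (Suc j mod length vs))"
proof (cases "Suc j < length vs")
  case True then show ?thesis using assms(1) by simp
next
  case False
  then have "Suc j = length vs" using assms(3) by simp
  moreover have "vs \<noteq> []" using assms(3) by auto
  ultimately show ?thesis using assms(2)
    by (metis diff_Suc_1 hd_conv_nth last_conv_nth mod_self)
qed

lemma cyc_deg:
  assumes "sg_hamiltonian_cycle V" "finite V" "w \<in> V"
  shows "sg_deg V w \<ge> 2"
proof -
  obtain vs where vs: "distinct vs" "set vs = V" "length vs \<ge> 3"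
    "\<forall>i. Suc i < length vs \<longrightarrow> sg_adj (vs ! i) (vs ! Suc i)" "sg_adj (last vs) (hd vs)"
    using assms(1) unfolding sg_hamiltonian_cycle_def by blast
  define L where "L = length vs"
  obtain i where i: "i < L" "vs ! i = w" using assms(3) vs(2) unfolding L_def by (metis in_set_conv_nth)
  define j0 where "j0 = (if i = 0 then L - 1 else i - 1)"
  define j1 where "j1 = (if Suc i = L then 0 else Suc i)"
  have L3: "L \<ge> 3" using vs(3) L_def by simp
  have j0L: "j0 < L" and j1L: "j1 < L" using L3 i by (auto simp: j0_def j1_def)
  have "Suc i mod L = j1" using i unfolding j1_def by auto
  then have a1: "sg_adj w (vs ! j1)" using cyc_adj[OF vs(4,5), of i] i unfolding L_def by simp
  have "Suc j0 mod L = i" using i L3 unfolding j0_def by auto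
  then have a0: "sg_adj w (vs ! j0)" using cyc_adj[OF vs(4,5), of j0] j0L i unfolding L_def
    by (auto intro: sg_adj_sym)
  have "j0 \<noteq> j1" using i L3 unfolding j0_def j1_def by auto
  then have "vs ! j0 \<noteq> vs ! j1" using vs(1) j0L j1L unfolding L_def by (simp add: nth_eq_iff_index_eq)
  moreover have "vs ! j0 \<in> V" "vs ! j1 \<in> V" using j0L j1L vs(2) unfolding L_def by auto
  ultimately have "{vs ! j0, vs ! j1} \<subseteq> {u \<in> V. sg_adj w u}" "card {vs ! j0, vs ! j1} = 2"
    using a0 a1 by auto
  then show ?thesis unfolding sg_deg_def using assms(2)
    by (metis (no_types, lifting) card_mono finite_subset mem_Collect_eq subsetI)
qed


lemma cyc_cut:
  assumes "sg_hamiltonian_cycle V" "v0 \<in> V"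
    and inv: "\<And>u v. u \<in> V - {v0} \<Longrightarrow> v \<in> V - {v0} \<Longrightarrow> sg_adj u v \<Longrightarrow> P u = P v"
    and "p \<in> V - {v0}" "q \<in> V - {v0}" "P p" "\<not> P q"
  shows False
proof -
  obtain vs where vs: "distinct vs" "set vs = V" "length vs \<ge> 3"
    "\<forall>i. Suc i < length vs \<longrightarrow> sg_adj (vs ! i) (vs ! Suc i)" "sg_adj (last vs) (hd vs)"
    using assms(1) unfolding sg_hamiltonian_cycle_def by blast
  define L where "L = length vs"
  obtain i0 where i0: "i0 < L" "vs ! i0 = v0" using assms(2) vs(2) unfolding L_def by (metis in_set_conv_nth)
  define g where "g j = vs ! ((j + i0 + 1) mod L)" for j
  have L3: "L \<ge> 3" using vs(3) L_def by simp
  have gV: "g j \<in> V - {v0}" if "j < L - 1" for j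
  proof -
    have "(j + i0 + 1) mod L \<noteq> i0"
    proof
      assume h: "(j + i0 + 1) mod L = i0"
      show False
      proof (cases "j + i0 + 1 < L")
        case True then show False using h by simp
      next
        case False
        then have "j + i0 + 1 - L < L" using that i0 by simp
        moreover have "(j + i0 + 1) mod L = (j + i0 + 1 - L) mod L"
          using False by (simp add: le_mod_geq)
        ultimately show False using h that by simp
      qed
    qed
    moreover have "(j + i0 + 1) mod L < L" using L3 by simp
    ultimately have "g j \<noteq> v0" using vs(1) i0 unfolding g_def L_def
      using nth_eq_iff_index_eq by metis
    moreover have "g j \<in> V" using vs(2) \<open>(j + i0 + 1) mod L < L\<close> unfolding g_def L_def
      by auto
    ultimately show ?thesis by simp
  qed
  have gadj: "sg_adj (g j) (g (Suc j))" for j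
  proof -
    have "Suc ((j + i0 + 1) mod L) mod L = (Suc j + i0 + 1) mod L" by (simp add: mod_Suc_eq)
    moreover have "(j + i0 + 1) mod L < L" using L3 by simp
    ultimately show ?thesis using cyc_adj[OF vs(4,5), of "(j + i0 + 1) mod L"] unfolding g_def L_def by argo
  qed
  have same: "j < L - 1 \<Longrightarrow> P (g j) = P (g 0)" for j
  proof (induction j)
    case 0 then show ?case by simp
  next
    case (Suc j)
    have "j < L - 1" "Suc j < L - 1" using Suc.prems by auto
    then have "g j \<in> V - {v0}" "g (Suc j) \<in> V - {v0}" using gV by blast+
    then have "P (g j) = P (g (Suc j))" using inv gadj[of j] by blast
    then show ?case using Suc.IH \<open>j < L - 1\<close> by blast
  qed
  have cover: "\<exists>j < L - 1. g j = v" if "v \<in> V - {v0}" for v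
  proof -
    have "v \<in> set vs" using that vs(2) by blast
    then obtain p where p: "p < L" "vs ! p = v" unfolding L_def by (auto simp: in_set_conv_nth)
    have "p \<noteq> i0" using p i0 that by auto
    define j where "j = (if p > i0 then p - i0 - 1 else p + L - i0 - 1)"
    have "j < L - 1" using p i0 \<open>p \<noteq> i0\<close> unfolding j_def by auto
    moreover have "(j + i0 + 1) mod L = p"
    proof (cases "p > i0")
      case True then show ?thesis using p unfolding j_def by simp
    next
      case False
      then have "j + i0 + 1 = p + L" using \<open>p \<noteq> i0\<close> i0 unfolding j_def by simp
      then show ?thesis using p by simp
    qed
    ultimately show ?thesis using p unfolding g_def by blast
  qed
  obtain jp where "jp < L - 1" "g jp = p" using cover assms(4) by blast
  obtain jq where "jq < L - 1" "g jq = q" using cover assms(5) by blast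
  have "P (g jp) = P (g 0)" "P (g jq) = P (g 0)" using same \<open>jp < L - 1\<close> \<open>jq < L - 1\<close> by blast+
  then show False using assms(6,7) \<open>g jp = p\<close> \<open>g jq = q\<close> by simp
qed




lemma construct:
  assumes "m - k \<ge> 2" "k \<ge> 1" "l \<ge> 1" "c \<ge> 1" "d \<ge> 1" "n = c + l + d"
    and arms: "k \<ge> 2 \<Longrightarrow> c \<ge> 2 \<and> d \<ge> 2"
  shows "sg_hamiltonian_cycle (C_sg m n k l c d)"
proof -
  define A where "A = int m - int k"
  define M where "M = int m"
  define N where "N = int n"
  define C where "C = int c"
  define H where "H = int l"
  have A2: "A \<ge> 2" using assms(1) unfolding A_def by linarith
  have AM: "A + 1 \<le> M" using assms(2) unfolding A_def M_def by simp
  have C1: "C \<ge> 1" and H1: "H \<ge> 1" using assms(3,4) unfolding C_def H_def by auto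
  have NCH: "N \<ge> C + H + 1" using assms(5,6) unfolding N_def C_def H_def by simp
  define T where "T = box A M (C+H+1) N"
  define Mi where "Mi = box A A (C+1) (C+H)"
  define B where "B = box A M 1 C"
  define Lp where "Lp = box 1 (A-1) 1 N"
  have hT: "\<exists>tT. hp T (A,N) tT \<and> sg_adj tT (A, C+H)"
  proof (cases "k \<ge> 2")
    case True
    then have "int d \<ge> 2" using arms by simp
    then have lt: "C+H+1 < N" using assms(6) unfolding N_def C_def H_def by simp
    have "hp T (A,N) (A,C+H+1)" unfolding T_def by (rule hp_rev, rule hp_Sleft) (use AM lt in auto)
    then show ?thesis by (intro exI[of _ "(A,C+H+1)"]) (auto simp: sg_adj_def)
  next
    case False
    then have "M = A + 1" using assms(2) unfolding A_def M_def by simp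
    moreover have "hp T (A,N) (M,C+H+1)" unfolding T_def
      by (rule hp_rev, rule hp_Danti) (use AM NCH in auto)
    ultimately show ?thesis by (intro exI[of _ "(M,C+H+1)"]) (auto simp: sg_adj_def)
  qed
  then obtain tT where tT: "hp T (A,N) tT" "sg_adj tT (A, C+H)" by blast
  have hMi: "hp Mi (A,C+H) (A,C+1)" unfolding Mi_def by (rule hp_rev, rule hp_col) (use H1 in auto)
  have hB: "\<exists>sB. hp B sB (A,1) \<and> sg_adj (A,C+1) sB"
  proof (cases "k \<ge> 2")
    case True
    then have C2: "C \<ge> 2" using arms unfolding C_def by simp
    have "hp B (A,C) (A,1)" unfolding B_def by (rule hp_rev, rule hp_Sleft) (use AM C2 in auto)
    then show ?thesis by (intro exI[of _ "(A,C)"]) (auto simp: sg_adj_def)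
  next
    case False
    then have "M = A + 1" using assms(2) unfolding A_def M_def by simp
    moreover have "hp B (M,C) (A,1)" unfolding B_def
      by (rule hp_rev, rule hp_D') (use AM C1 in auto)
    ultimately show ?thesis by (intro exI[of _ "(M,C)"]) (auto simp: sg_adj_def)
  qed
  then obtain sB where sB: "hp B sB (A,1)" "sg_adj (A,C+1) sB" by blast
  have hLp: "hp Lp (A-1,1) (A-1,N)" unfolding Lp_def
    by (rule hp_Sright) (use A2 NCH C1 H1 in auto)
  have p1: "hp (T \<union> Mi) (A,N) (A,C+1)"
    by (rule hp_append[OF tT(1) hMi]) (use tT(2) C1 H1 in \<open>auto simp: T_def Mi_def box_def\<close>)
  have p2: "hp ((T \<union> Mi) \<union> B) (A,N) (A,1)"
    by (rule hp_append[OF p1 sB(1)]) (use sB(2) C1 H1 in \<open>auto simp: T_def Mi_def B_def box_def\<close>)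
  have p3: "hp (((T \<union> Mi) \<union> B) \<union> Lp) (A,N) (A-1,N)"
    by (rule hp_append[OF p2 hLp]) (auto simp: T_def Mi_def B_def Lp_def box_def sg_adj_def)
  have eq: "((T \<union> Mi) \<union> B) \<union> Lp = C_sg m n k l c d"
  proof (rule set_eqI)
    fix p :: vert
    obtain x y where p: "p = (x,y)" by fastforce
    have Ak: "M - int k = A" unfolding A_def M_def by simp
    have N': "N = C + H + int d" using assms(6) unfolding N_def C_def H_def by simp
    show "p \<in> ((T \<union> Mi) \<union> B) \<union> Lp \<longleftrightarrow> p \<in> C_sg m n k l c d"
      unfolding p T_def Mi_def B_def Lp_def box_def C_sg_def rect_sg_def
      using A2 AM C1 H1 N' assms(5) unfolding A_def[symmetric] M_def[symmetric] N_def[symmetric]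
        C_def[symmetric] H_def[symmetric]
      by (simp add: Ak; arith)
  qed
  show ?thesis
  proof (rule hp_cycle[OF p3[unfolded eq]])
    show "sg_adj (A - 1, N) (A, N)" by (auto simp: sg_adj_def)
    show "(A,N) \<in> C_sg m n k l c d" "(A-1,N) \<in> C_sg m n k l c d" "(A,1) \<in> C_sg m n k l c d"
      unfolding eq[symmetric] using A2 AM NCH C1 H1 by (auto simp: T_def Mi_def B_def Lp_def box_def)
    show "(A,N) \<noteq> (A-1,N)" "(A-1,N) \<noteq> (A,1)" "(A,N) \<noteq> (A,1)" using NCH C1 H1 by auto
  qed
qed


lemma C_fin: "finite (C_sg m n k l c d)"
proof -
  have "C_sg m n k l c d \<subseteq> {1..int m} \<times> {1..int n}"
    unfolding C_sg_def rect_sg_def by auto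
  then show ?thesis by (rule finite_subset) auto
qed

lemma deg_bot:
  assumes "k \<ge> 2" "c = 1" "m - k \<ge> 1" "l \<ge> 1" "n \<ge> 1"
  shows "(int m, 1) \<in> C_sg m n k l c d \<and> sg_deg (C_sg m n k l c d) (int m, 1) = 1"
proof -
  have n1: "n \<ge> 1" by fact
  have "{u \<in> C_sg m n k l c d. sg_adj (int m, 1) u} = {(int m - 1, 1)}"
  proof (rule set_eqI)
    fix p :: vert
    obtain x y where p: "p = (x,y)" by fastforce
    show "p \<in> {u \<in> C_sg m n k l c d. sg_adj (int m, 1) u} \<longleftrightarrow> p \<in> {(int m - 1, 1)}"
      unfolding p C_sg_def rect_sg_def sg_adj_def using assms n1 by (simp; arith)
  qed
  then show ?thesis unfolding sg_deg_def C_sg_def rect_sg_def using assms n1 by simp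
qed

lemma deg_top:
  assumes "k \<ge> 2" "n = c + l + 1" "m - k \<ge> 1" "l \<ge> 1" "c \<ge> 1"
  shows "(int m, int n) \<in> C_sg m n k l c d \<and> sg_deg (C_sg m n k l c d) (int m, int n) = 1"
proof -
  have "{u \<in> C_sg m n k l c d. sg_adj (int m, int n) u} = {(int m - 1, int n)}"
  proof (rule set_eqI)
    fix p :: vert
    obtain x y where p: "p = (x,y)" by fastforce
    show "p \<in> {u \<in> C_sg m n k l c d. sg_adj (int m, int n) u} \<longleftrightarrow> p \<in> {(int m - 1, int n)}"
      unfolding p C_sg_def rect_sg_def sg_adj_def using assms by (simp; arith)
  qed
  then show ?thesis unfolding sg_deg_def C_sg_def rect_sg_def using assms by simp
qed

lemma no_hc_a1:
  assumes "m - k = 1" "l \<ge> 1" "c \<ge> 1" "n \<ge> c + l + 1" "m \<ge> 2"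
  shows "\<not> sg_hamiltonian_cycle (C_sg m n k l c d)"
proof
  assume hc: "sg_hamiltonian_cycle (C_sg m n k l c d)"
  define V where "V = C_sg m n k l c d"
  have km: "int m - int k = 1" using assms(1) by simp
  have mem: "(x, y) \<in> V \<longleftrightarrow> 1 \<le> x \<and> x \<le> int m \<and> 1 \<le> y \<and> y \<le> int n \<and>
     \<not> (2 \<le> x \<and> int c + 1 \<le> y \<and> y \<le> int c + int l)" for x y
    unfolding V_def C_sg_def rect_sg_def using km by auto
  have v0: "(1, int c + 1) \<in> V" using mem assms by simp
  have row: "snd v \<noteq> int c + 1" if "v \<in> V - {(1, int c + 1)}" for v
  proof -
    obtain x y where v: "v = (x,y)" by fastforce
    show ?thesis using that mem[of x y] assms(2) unfolding v by auto
  qed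
  show False
  proof (rule cyc_cut[OF hc[folded V_def] v0, of "\<lambda>v. snd v \<le> int c" "(1,1)" "(1, int n)"])
    fix u v assume u: "u \<in> V - {(1, int c + 1)}" and v: "v \<in> V - {(1, int c + 1)}" and "sg_adj u v"
    then have "\<bar>snd u - snd v\<bar> \<le> 1" unfolding sg_adj_def by simp
    then show "(snd u \<le> int c) = (snd v \<le> int c)" using row[OF u] row[OF v] by arith
  next
    show "(1,1) \<in> V - {(1, int c + 1)}" using mem assms by simp
    show "(1, int n) \<in> V - {(1, int c + 1)}" using mem assms by simp
  qed (use assms in simp_all)
qed

theorem theorem4:
  fixes m n k l c d :: nat
  assumes "m \<ge> 2" and "n \<ge> 3" and "k \<ge> 1" and "l \<ge> 1" and "c \<ge> 1"
    and "d = n - l - c" and "d \<ge> 1" and "m - k \<ge> 1"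
  shows "sg_hamiltonian_cycle (C_sg m n k l c d) \<longleftrightarrow>
         \<not> (m - k = 1 \<or> (\<exists>w \<in> C_sg m n k l c d. sg_deg (C_sg m n k l c d) w = 1))"
proof
  assume hc: "sg_hamiltonian_cycle (C_sg m n k l c d)"
  have n: "n = c + l + d" using assms(6,7) by simp
  show "\<not> (m - k = 1 \<or> (\<exists>w \<in> C_sg m n k l c d. sg_deg (C_sg m n k l c d) w = 1))"
  proof
    assume "m - k = 1 \<or> (\<exists>w \<in> C_sg m n k l c d. sg_deg (C_sg m n k l c d) w = 1)"
    then show False
    proof
      assume "m - k = 1"
      moreover have "n \<ge> c + l + 1" using n assms(7) by linarith
      ultimately show False using no_hc_a1[of m k l c n d] hc assms(1,4,5) by blast
    next
      assume "\<exists>w \<in> C_sg m n k l c d. sg_deg (C_sg m n k l c d) w = 1"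
      then obtain w where "w \<in> C_sg m n k l c d" "sg_deg (C_sg m n k l c d) w = 1" by blast
      then show False using cyc_deg[OF hc C_fin, of w] by simp
    qed
  qed
next
  assume h: "\<not> (m - k = 1 \<or> (\<exists>w \<in> C_sg m n k l c d. sg_deg (C_sg m n k l c d) w = 1))"
  have n: "n = c + l + d" using assms(6,7) by simp
  have a2: "m - k \<ge> 2" using h assms(8) by simp
  have arms: "c \<ge> 2 \<and> d \<ge> 2" if "k \<ge> 2"
  proof (rule ccontr)
    assume "\<not> (c \<ge> 2 \<and> d \<ge> 2)"
    then have "c = 1 \<or> d = 1" using assms by auto
    then show False
    proof
      assume "c = 1"
      then show False using deg_bot[of k c m l n d] that assms(2,4,8) h by auto
    next
      assume "d = 1"
      then show False using deg_top[of k n c l m d] that assms(4,5,8) h n by auto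
    qed
  qed
  show "sg_hamiltonian_cycle (C_sg m n k l c d)"
    by (rule construct[OF a2 assms(3,4,5,7) n arms])
qed

end
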